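(* Fix a set size $m\ge 1$, a population CDF $F$ and a point $t$. For $r=1,\dots,m$ let $Y_{(r)}^{1},\dots,Y_{(r)}^{n_r}$ be the measured units of the $r$-th stratum of a MinPNS sample obtained under perfect ranking, all $n=\sum_{r=1}^m n_r$ observations being mutually independent, and the observations in stratum $r$ being identically distributed with CDF \[F_{(r)}(t)=\frac{1}{r}\sum_{i=1}^{r}\mathbb{B}\big(F(t),i,m+1-i\big).\] Let $F_n(t)=\frac1n\sum_{r=1}^m\sum_{j=1}^{n_r}\mathbb{I}(Y_{(r)}^j\le t)$, let $q_r=n_r/n$, let $g_n(x)=\sum_{r=1}^m q_r\frac1r\sum_{i=1}^r\mathbb{B}(x,i,m+1-i)$ for $x\in[0,1]$ (a bijection of $[0,1]$), and define the moment-based estimator $F_{mb}(t)=g_n^{-1}(F_n(t))$. Suppose $n_r\to\infty$ for every $r$ (i.e. $n^*=\min_{r}n_r\to\infty$) in such a way that $n_r/n\to\lambda_r\in(0,1)$ with $\sum_{r=1}^m\lambda_r=1$. Then $\sqrt n\,(F_{mb}(t)-F(t))$ converges in distribution to a normal distribution with mean zero and variance \[\sigma_{mb}^2=\Big(\sum_{r=1}^m\lambda_rF_{(r)}(t)\big(1-F_{(r)}(t)\big)\Big)\big(g'(F(t))\big)^{-2},\qquad g(x)=\sum_{r=1}^m\lambda_r\frac1r\sum_{i=1}^r\mathbb{B}(x,i,m+1-i).\]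
   Context: $\mathbb{B}(x,i,m+1-i)=\int_0^x i\binom{m}{i}u^{i-1}(1-u)^{m-i}\,du$ is the CDF of the Beta$(i,m+1-i)$ distribution evaluated at $x$; $\mathbb{I}$ is the indicator function. MinPNS (minimum partial nomination sampling): $n$ independent sets of $m$ units are drawn from the population; in each set the unit judged smallest is measured, but the ranker may declare that this unit is tied with other units, in which case one of the tied units is chosen at random; a measured unit is in stratum $r$ if it came from a set in which exactly $r$ units (including itself) were declared tied for smallest. Perfect ranking means that in every set the tied units are exactly the $r$ smallest units of the set, so that the measured unit is a uniformly random one of the $r$ smallest order statistics of $m$ i.i.d. draws from $F$; the stratum sizes $n_r$ are treated as given. *)

theory Defs
  imports "HOL-Probability.Probability"
begin

text \<open>CDF of the Beta(i, m+1-i) distribution at x (the paper's B(x,i,m+1-i)).\<close>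
definition betaB :: "nat \<Rightarrow> nat \<Rightarrow> real \<Rightarrow> real" where
  "betaB m i x = (LBINT u=0..x. real i * real (m choose i) * u ^ (i - 1) * (1 - u) ^ (m - i))"

definition Fstrat :: "nat \<Rightarrow> (real \<Rightarrow> real) \<Rightarrow> nat \<Rightarrow> real \<Rightarrow> real" where
  "Fstrat m F r s = (1 / real r) * (\<Sum>i=1..r. betaB m i (F s))"

definition gmix :: "nat \<Rightarrow> (nat \<Rightarrow> real) \<Rightarrow> real \<Rightarrow> real" where
  "gmix m w x = (\<Sum>r=1..m. w r * (1 / real r) * (\<Sum>i=1..r. betaB m i x))"

definition normal_var :: "real \<Rightarrow> real measure" where
  "normal_var v = (if v = 0 then return borel 0 else density lborel (normal_density 0 (sqrt v)))"

end

theory Submission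
  imports Defs
begin

definition dens :: "nat \<Rightarrow> nat \<Rightarrow> real \<Rightarrow> real" where
  "dens m i u = real i * real (m choose i) * u ^ (i - 1) * (1 - u) ^ (m - i)"

definition Gm :: "nat \<Rightarrow> nat \<Rightarrow> real \<Rightarrow> real" where
  "Gm m r x = (1 / real r) * (\<Sum>i=1..r. betaB m i x)"

definition Gd :: "nat \<Rightarrow> nat \<Rightarrow> real \<Rightarrow> real" where
  "Gd m r x = (1 / real r) * (\<Sum>i=1..r. dens m i x)"

lemma betaB_deriv:
  assumes "-1 < x" "x < 2"
  shows "(betaB m i has_real_derivative dens m i x) (at x)"
proof -
  have c: "continuous_on {-1..2} (dens m i)"
    unfolding dens_def by (intro continuous_intros)
  have "((\<lambda>u. LBINT y=0..u. dens m i y) has_vector_derivative (dens m i x)) (at x within {-1..2})"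
    using interval_integral_FTC2[of "-1" 0 2 "dens m i" x] c assms by (auto simp: zero_ereal_def)
  hence "((\<lambda>u. LBINT y=0..u. dens m i y) has_vector_derivative (dens m i x)) (at x)"
    using assms by (subst (asm) at_within_Icc_at) auto
  moreover have "betaB m i = (\<lambda>u. LBINT y=0..u. dens m i y)"
    by (auto simp: betaB_def dens_def fun_eq_iff)
  ultimately show ?thesis
    by (simp add: has_real_derivative_iff_has_vector_derivative)
qed

lemma Gm_deriv:
  assumes "-1 < x" "x < 2"
  shows "(Gm m r has_real_derivative Gd m r x) (at x)"
  unfolding Gm_def Gd_def
  by (intro DERIV_cmult DERIV_sum betaB_deriv assms)

lemma Gm_isCont: "-1 < x \<Longrightarrow> x < 2 \<Longrightarrow> isCont (Gm m r) x"
  using Gm_deriv DERIV_isCont by blast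

lemma Gm_cont: "continuous_on {0..1} (Gm m r)"
  using Gm_isCont by (intro continuous_at_imp_continuous_on) auto

lemma Gm_0: "Gm m r 0 = 0"
  by (simp add: Gm_def betaB_def zero_ereal_def)

lemma dens_nonneg: "0 \<le> u \<Longrightarrow> u \<le> 1 \<Longrightarrow> 0 \<le> dens m i u"
  unfolding dens_def by (intro mult_nonneg_nonneg) auto

lemma Gd_nonneg: "0 \<le> u \<Longrightarrow> u \<le> 1 \<Longrightarrow> 0 \<le> Gd m r u"
  unfolding Gd_def by (intro mult_nonneg_nonneg sum_nonneg dens_nonneg) auto

lemma Gd_pos:
  assumes "1 \<le> m" "1 \<le> r" "0 \<le> u" "u < 1"
  shows "0 < Gd m r u"
proof -
  have "dens m 1 u > 0" using assms by (simp add: dens_def)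
  moreover have "dens m 1 u \<le> (\<Sum>i=1..r. dens m i u)"
    using assms by (intro member_le_sum dens_nonneg) auto
  ultimately show ?thesis using assms unfolding Gd_def by simp
qed

lemma Gd_pos1:
  assumes "1 \<le> m" "0 \<le> u" "u \<le> 1"
  shows "0 < Gd m m u"
proof (cases "u < 1")
  case True thus ?thesis using Gd_pos assms by auto
next
  case False
  hence u: "u = 1" using assms by auto
  have "dens m m u > 0" using assms u by (simp add: dens_def)
  moreover have "dens m m u \<le> (\<Sum>i=1..m. dens m i u)"
    using assms by (intro member_le_sum dens_nonneg) auto
  ultimately show ?thesis using assms unfolding Gd_def by simp
qed

lemma Gm_strict:
  assumes "1 \<le> m" "1 \<le> r" "0 \<le> x" "x < y" "y \<le> 1"
  shows "Gm m r x < Gm m r y"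
proof (rule DERIV_pos_imp_increasing_open[OF assms(4)])
  fix z assume "x < z" "z < y"
  thus "\<exists>d. (Gm m r has_real_derivative d) (at z) \<and> 0 < d"
    using assms by (intro exI[of _ "Gd m r z"]) (auto intro!: Gm_deriv Gd_pos)
next
  show "continuous_on {x..y} (Gm m r)"
    using assms by (intro continuous_at_imp_continuous_on ballI Gm_isCont) auto
qed

lemma gmix_Gm: "gmix m w x = (\<Sum>r=1..m. w r * Gm m r x)"
  unfolding gmix_def Gm_def by (simp add: mult.assoc)

lemma Fstrat_Gm: "Fstrat m F r s = Gm m r (F s)"
  unfolding Fstrat_def Gm_def by simp

definition psi :: "real \<Rightarrow> real \<Rightarrow> complex" where
  "psi p u = complex_of_real p * iexp (u * (1 - p)) + complex_of_real (1 - p) * iexp (- (u * p))"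

lemma iexp_T: "cmod (iexp x - (1 + \<i> * complex_of_real x - complex_of_real (x^2 / 2))) \<le> \<bar>x\<bar>^3 / 6"
proof -
  have "cmod (iexp x - (\<Sum>k\<le>2. (\<i> * x)^k / fact k)) \<le> \<bar>x\<bar>^(Suc 2) / fact (Suc 2)"
    by (rule iexp_approx1)
  moreover have "(\<Sum>k\<le>2. (\<i> * complex_of_real x)^k / fact k) = 1 + \<i> * complex_of_real x - complex_of_real (x^2 / 2)"
    by (simp add: eval_nat_numeral complex_eq_iff power2_eq_square)
  moreover have "fact (Suc 2) = (6::real)" by (simp add: eval_nat_numeral)
  ultimately show ?thesis by simp
qed

lemma psi_approx:
  assumes "0 \<le> p" "p \<le> 1"
  shows "cmod (psi p u - complex_of_real (1 - u^2 * (p * (1 - p)) / 2)) \<le> \<bar>u\<bar>^3 / 6"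
proof -
  define a where "a = u * (1 - p)"
  define b where "b = - (u * p)"
  define T where "T x = 1 + \<i> * complex_of_real x - complex_of_real (x^2 / 2)" for x
  have eq: "complex_of_real (1 - u^2 * (p * (1 - p)) / 2) = complex_of_real p * T a + complex_of_real (1 - p) * T b"
    unfolding T_def a_def b_def by (simp add: complex_eq_iff power2_eq_square field_simps; algebra)
  have "psi p u - complex_of_real (1 - u^2 * (p * (1 - p)) / 2) =
        complex_of_real p * (iexp a - T a) + complex_of_real (1 - p) * (iexp b - T b)"
    unfolding eq psi_def a_def b_def by (simp add: algebra_simps)
  also have "cmod \<dots> \<le> p * (\<bar>a\<bar>^3/6) + (1 - p) * (\<bar>b\<bar>^3/6)"
  proof -
    have "cmod (complex_of_real p * (iexp a - T a)) = p * cmod (iexp a - T a)"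
      using assms by (simp add: norm_mult del: of_real_diff)
    also have "\<dots> \<le> p * (\<bar>a\<bar>^3/6)"
      using iexp_T[of a] assms unfolding T_def by (intro mult_left_mono) auto
    finally have 1: "cmod (complex_of_real p * (iexp a - T a)) \<le> p * (\<bar>a\<bar>^3/6)" .
    have "cmod (complex_of_real (1-p) * (iexp b - T b)) = (1-p) * cmod (iexp b - T b)"
      using assms by (simp add: norm_mult del: of_real_diff)
    also have "\<dots> \<le> (1-p) * (\<bar>b\<bar>^3/6)"
      using iexp_T[of b] assms unfolding T_def by (intro mult_left_mono) auto
    finally have 2: "cmod (complex_of_real (1-p) * (iexp b - T b)) \<le> (1-p) * (\<bar>b\<bar>^3/6)" .
    show ?thesis using 1 2 by (meson norm_triangle_le add_mono order_trans)
  qed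
  also have "\<dots> \<le> p * (\<bar>u\<bar>^3/6) + (1 - p) * (\<bar>u\<bar>^3/6)"
  proof -
    have "\<bar>a\<bar> \<le> \<bar>u\<bar>" "\<bar>b\<bar> \<le> \<bar>u\<bar>" using assms
      by (auto simp: a_def b_def abs_mult intro!: mult_left_le)
    hence "\<bar>a\<bar>^3 \<le> \<bar>u\<bar>^3" "\<bar>b\<bar>^3 \<le> \<bar>u\<bar>^3" by (auto intro: power_mono)
    thus ?thesis using assms by (intro add_mono mult_left_mono) auto
  qed
  also have "\<dots> = \<bar>u\<bar>^3/6" by (simp add: field_simps)
  finally show ?thesis .
qed

lemma psi_norm:
  assumes "0 \<le> p" "p \<le> 1"
  shows "cmod (psi p u) \<le> 1"
proof -
  have "cmod (psi p u) \<le> cmod (complex_of_real p * iexp (u * (1 - p))) + cmod (complex_of_real (1 - p) * iexp (- (u * p)))"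
    unfolding psi_def by (rule norm_triangle_ineq)
  also have "\<dots> = p + (1 - p)" using assms by (simp add: norm_mult del: of_real_diff)
  finally show ?thesis by simp
qed

lemma factor_lim:
  fixes N n :: "nat \<Rightarrow> nat"
  assumes Ninf: "filterlim N at_top sequentially"
    and rat: "(\<lambda>k. real (n k) / real (N k)) \<longlonglongrightarrow> l"
  shows "(\<lambda>k. (1 - c / real (N k)) ^ (n k)) \<longlonglongrightarrow> exp (- c * l)"
proof -
  have 1: "(\<lambda>k. (1 + (-c) / real (N k)) ^ (N k)) \<longlonglongrightarrow> exp (-c)"
    using filterlim_compose[OF tendsto_exp_limit_sequentially[of "-c"] Ninf] by simp
  have 2: "(\<lambda>k. ((1 + (-c) / real (N k)) ^ (N k)) powr (real (n k) / real (N k))) \<longlonglongrightarrow> exp (-c) powr l"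
    by (rule tendsto_powr[OF 1 rat]) simp
  have e: "exp (-c) powr l = exp (- c * l)" by (simp add: powr_def mult.commute)
  have ev: "eventually (\<lambda>k. real (N k) > \<bar>c\<bar> \<and> N k > 0) sequentially"
  proof -
    have "eventually (\<lambda>k. N k \<ge> nat \<lceil>\<bar>c\<bar>\<rceil> + 1) sequentially"
      using Ninf by (simp add: filterlim_at_top)
    thus ?thesis by eventually_elim linarith
  qed
  have eq: "eventually (\<lambda>k. ((1 + (-c) / real (N k)) ^ (N k)) powr (real (n k) / real (N k)) = (1 - c / real (N k)) ^ (n k)) sequentially"
    using ev
  proof eventually_elim
    case (elim k)
    define a where "a = 1 - c / real (N k)"
    have apos: "a > 0" using elim unfolding a_def
      by (simp add: field_simps) (smt (verit) abs_ge_self)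
    have "((1 + (-c) / real (N k)) ^ (N k)) powr (real (n k) / real (N k)) = (a powr real (N k)) powr (real (n k) / real (N k))"
      using apos by (simp add: a_def powr_realpow)
    also have "\<dots> = a powr (real (n k))" using elim by (simp add: powr_powr)
    also have "\<dots> = a ^ (n k)" using apos by (simp add: powr_realpow)
    finally show ?case by (simp add: a_def)
  qed
  show ?thesis using 2 unfolding e tendsto_cong[OF eq] .
qed

lemma prod_limit:
  fixes n :: "nat \<Rightarrow> nat \<Rightarrow> nat" and p lam :: "nat \<Rightarrow> real" and m :: nat and s :: real
  assumes m: "m \<ge> 1"
    and p: "\<And>r. r \<in> {1..m} \<Longrightarrow> 0 \<le> p r \<and> p r \<le> 1"
    and ninf: "\<And>r. r \<in> {1..m} \<Longrightarrow> filterlim (\<lambda>k. n k r) at_top sequentially"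
    and rat: "\<And>r. r \<in> {1..m} \<Longrightarrow> (\<lambda>k. real (n k r) / real (\<Sum>r=1..m. n k r)) \<longlonglongrightarrow> lam r"
  shows "(\<lambda>k. \<Prod>r=1..m. psi (p r) (s / sqrt (real (\<Sum>r=1..m. n k r))) ^ n k r)
           \<longlonglongrightarrow> complex_of_real (exp (- (s^2 * (\<Sum>r=1..m. lam r * (p r * (1 - p r)))) / 2))"
proof -
  define N where "N k = (\<Sum>r=1..m. n k r)" for k
  define v where "v r = p r * (1 - p r)" for r
  have v: "0 \<le> v r \<and> v r \<le> 1" if "r \<in> {1..m}" for r
    using p[OF that] unfolding v_def by (auto intro: mult_le_one mult_nonneg_nonneg)
  have Ninf: "filterlim N at_top sequentially"
  proof (rule filterlim_at_top_mono[OF ninf[of 1]])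
    show "1 \<in> {1..m}" using m by auto
    show "\<forall>\<^sub>F x in sequentially. n x 1 \<le> N x"
      unfolding N_def using m by (intro always_eventually allI member_le_sum) auto
  qed
  have rN: "filterlim (\<lambda>k. real (N k)) at_top sequentially"
    by (rule filterlim_compose[OF filterlim_real_sequentially Ninf])
  have sN: "filterlim (\<lambda>k. sqrt (real (N k))) at_top sequentially"
    by (rule filterlim_compose[OF sqrt_at_top rN])
  define B where "B k = (\<Prod>r=1..m. (1 - (s^2 * v r / 2) / real (N k)) ^ n k r)" for k
  have Blim: "B \<longlonglongrightarrow> (\<Prod>r=1..m. exp (- (s^2 * v r / 2) * lam r))"
    unfolding B_def
    by (intro tendsto_prod factor_lim Ninf) (use rat in \<open>auto simp: N_def\<close>)
  have L: "(\<Prod>r=1..m. exp (- (s^2 * v r / 2) * lam r)) = exp (- (s^2 * (\<Sum>r=1..m. lam r * v r)) / 2)"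
    by (simp add: exp_sum[symmetric] sum_distrib_left sum_divide_distrib[symmetric] sum_negf[symmetric] algebra_simps)
  define A where "A k = (\<Prod>r=1..m. psi (p r) (s / sqrt (real (N k))) ^ n k r)" for k
  have ev: "eventually (\<lambda>k. real (N k) \<ge> s^2 + 1) sequentially"
    using rN by (simp add: filterlim_at_top)
  have bound: "eventually (\<lambda>k. norm (A k - complex_of_real (B k)) \<le> \<bar>s\<bar>^3 / 6 / sqrt (real (N k))) sequentially"
    using ev
  proof eventually_elim
    case (elim k)
    define u where "u = s / sqrt (real (N k))"
    have Npos: "real (N k) > 0" using elim by (smt (verit) zero_le_power2)
    have u2: "u^2 = s^2 / real (N k)" using Npos by (simp add: u_def power_divide)
    have u2le: "u^2 \<le> 1" using Npos elim by (simp add: u2 field_simps)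
    define b where "b r = 1 - u^2 * v r / 2" for r
    have bB: "complex_of_real (B k) = (\<Prod>r=1..m. complex_of_real (b r) ^ n k r)"
      unfolding B_def b_def u2 by (simp add: field_simps)
    have bn: "norm (complex_of_real (b r)) \<le> 1" if "r \<in> {1..m}" for r
    proof -
      have "0 \<le> u^2 * v r" "u^2 * v r \<le> 1" using v[OF that] u2le
        by (auto intro: mult_le_one)
      thus ?thesis unfolding norm_of_real b_def by simp
    qed
    have "norm (A k - complex_of_real (B k)) \<le> (\<Sum>r=1..m. norm (psi (p r) u ^ n k r - complex_of_real (b r) ^ n k r))"
      unfolding A_def bB u_def[symmetric]
    proof (rule norm_prod_diff)
      fix r assume r: "r \<in> {1..m}"
      show "norm (psi (p r) u ^ n k r) \<le> 1"
        using psi_norm[of "p r" u] p[OF r] by (auto simp: norm_power intro!: power_le_one)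
      show "norm (complex_of_real (b r) ^ n k r) \<le> 1"
        using bn[OF r] by (auto simp: norm_power intro!: power_le_one simp del: norm_of_real)
    qed
    also have "\<dots> \<le> (\<Sum>r=1..m. real (n k r) * (\<bar>u\<bar>^3 / 6))"
    proof (rule sum_mono)
      fix r assume r: "r \<in> {1..m}"
      have "norm (psi (p r) u ^ n k r - complex_of_real (b r) ^ n k r) \<le> real (n k r) * norm (psi (p r) u - complex_of_real (b r))"
        using psi_norm[of "p r" u] p[OF r] bn[OF r] by (intro norm_power_diff) auto
      also have "\<dots> \<le> real (n k r) * (\<bar>u\<bar>^3 / 6)"
        using psi_approx[of "p r" u] p[OF r] unfolding b_def v_def
        by (intro mult_left_mono) auto
      finally show "norm (psi (p r) u ^ n k r - complex_of_real (b r) ^ n k r) \<le> real (n k r) * (\<bar>u\<bar>^3 / 6)" .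
    qed
    also have "\<dots> = real (N k) * (\<bar>u\<bar>^3 / 6)"
      by (simp add: N_def sum_distrib_right)
    also have "\<dots> = \<bar>s\<bar>^3 / 6 / sqrt (real (N k))"
    proof -
      have "sqrt (real (N k)) ^ 3 = real (N k) * sqrt (real (N k))"
        using Npos by (simp add: power3_eq_cube)
      thus ?thesis using Npos
        by (simp add: u_def abs_div power_divide field_simps)
    qed
    finally show ?case .
  qed
  have "(\<lambda>k. \<bar>s\<bar>^3 / 6 / sqrt (real (N k))) \<longlonglongrightarrow> 0"
    by (rule tendsto_divide_0[OF tendsto_const filterlim_at_top_imp_at_infinity[OF sN]])
  hence diff: "(\<lambda>k. A k - complex_of_real (B k)) \<longlonglongrightarrow> 0"
    by (rule Lim_null_comparison[OF bound])
  have "(\<lambda>k. complex_of_real (B k) + (A k - complex_of_real (B k))) \<longlonglongrightarrow>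
          complex_of_real (\<Prod>r=1..m. exp (- (s^2 * v r / 2) * lam r)) + 0"
    by (intro tendsto_add tendsto_of_real Blim diff)
  thus ?thesis unfolding L by (simp add: A_def N_def v_def)
qed

lemma (in prob_space) char_indicator:
  fixes Z :: "'a \<Rightarrow> real"
  assumes Zm: "Z \<in> borel_measurable M" and pZ: "prob {\<omega>\<in>space M. Z \<omega> \<le> t} = p"
  shows "char (distr M borel (\<lambda>\<omega>. ((if Z \<omega> \<le> t then 1 else 0) - p) / c)) s = psi p (s / c)"
proof -
  define A where "A = {\<omega>\<in>space M. Z \<omega> \<le> t}"
  note Zm[measurable]
  have A: "A \<in> sets M" unfolding A_def by measurable
  define e1 where "e1 = iexp ((s/c) * (1 - p))"
  define e2 where "e2 = iexp (- ((s/c) * p))"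
  have hm: "(\<lambda>x::real. ((if x \<le> t then 1 else 0) - p) / c) \<in> borel_measurable borel" by measurable
  have fm: "(\<lambda>\<omega>. ((if Z \<omega> \<le> t then 1 else 0) - p) / c) \<in> borel_measurable M"
    using measurable_compose[OF Zm hm] by simp
  have "char (distr M borel (\<lambda>\<omega>. ((if Z \<omega> \<le> t then 1 else 0) - p) / c)) s =
        (CLINT \<omega>|M. iexp (s * (((if Z \<omega> \<le> t then 1 else 0) - p) / c)))"
    unfolding char_def using fm by (subst integral_distr) auto
  also have "\<dots> = (CLINT \<omega>|M. indicator A \<omega> *\<^sub>R (e1 - e2) + e2)"
    by (intro Bochner_Integration.integral_cong) (auto simp: A_def e1_def e2_def indicator_def)
  also have "\<dots> = (CLINT \<omega>|M. indicator A \<omega> *\<^sub>R (e1 - e2)) + (CLINT \<omega>|M. e2)"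
    using A by (intro Bochner_Integration.integral_add integrable_indicator) (auto simp: less_top[symmetric])
  also have "\<dots> = prob A *\<^sub>R (e1 - e2) + e2"
    using A by (subst integral_scaleR_left) (auto simp: less_top[symmetric] integral_indicator prob_space Int_absorb2 sets.sets_into_space)
  also have "\<dots> = psi p (s / c)"
    using pZ unfolding A_def psi_def e1_def e2_def by (simp add: algebra_simps scaleR_conv_of_real)
  finally show ?thesis .
qed

lemma char_scaled_std:
  "char (distr std_normal_distribution borel (\<lambda>y. a * y)) s = complex_of_real (exp (- ((a * s)^2) / 2))"
proof -
  have "char (distr std_normal_distribution borel (\<lambda>y. a * y)) s = char std_normal_distribution (a * s)"
    unfolding char_def by (subst integral_distr) (auto simp: ac_simps)
  thus ?thesis by (simp add: char_std_normal_distribution)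
qed

lemma real_distr_scaled_std: "real_distribution (distr std_normal_distribution borel (\<lambda>y. a * y))"
  by (rule prob_space.real_distribution_distr) (auto intro: prob_space_normal_density)

lemma clt_strata:
  fixes m :: nat and t :: real and \<Omega> :: "nat \<Rightarrow> 'a measure"
    and Y :: "nat \<Rightarrow> nat \<Rightarrow> nat \<Rightarrow> 'a \<Rightarrow> real" and nr :: "nat \<Rightarrow> nat \<Rightarrow> nat"
    and lam p :: "nat \<Rightarrow> real"
  assumes m: "m \<ge> 1"
    and prob: "\<And>k. prob_space (\<Omega> k)"
    and indep: "\<And>k. prob_space.indep_vars (\<Omega> k) (\<lambda>_. borel) (\<lambda>(r, j). Y k r j)
                       {(r, j). r \<in> {1..m} \<and> j < nr k r}"
    and pY: "\<And>k r j. r \<in> {1..m} \<Longrightarrow> j < nr k r \<Longrightarrow>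
                   measure (\<Omega> k) {\<omega> \<in> space (\<Omega> k). Y k r j \<omega> \<le> t} = p r"
    and p01: "\<And>r. r \<in> {1..m} \<Longrightarrow> 0 \<le> p r \<and> p r \<le> 1"
    and nr_inf: "\<And>r. r \<in> {1..m} \<Longrightarrow> filterlim (\<lambda>k. nr k r) at_top sequentially"
    and ratio: "\<And>r. r \<in> {1..m} \<Longrightarrow> (\<lambda>k. real (nr k r) / real (\<Sum>r=1..m. nr k r)) \<longlonglongrightarrow> lam r"
    and lam0: "\<And>r. r \<in> {1..m} \<Longrightarrow> 0 \<le> lam r"
  shows "weak_conv_m (\<lambda>k. distr (\<Omega> k) borel (\<lambda>\<omega>. \<Sum>i\<in>{(r, j). r \<in> {1..m} \<and> j < nr k r}.
            ((if Y k (fst i) (snd i) \<omega> \<le> t then 1 else 0) - p (fst i)) / sqrt (real (\<Sum>r=1..m. nr k r))))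
     (distr std_normal_distribution borel (\<lambda>y. sqrt (\<Sum>r=1..m. lam r * (p r * (1 - p r))) * y))"
proof -
  define I where "I k = {(r, j). r \<in> {1..m} \<and> j < nr k r}" for k
  define N where "N k = (\<Sum>r=1..m. nr k r)" for k
  define V where "V = (\<Sum>r=1..m. lam r * (p r * (1 - p r)))"
  define h where "h k i x = ((if x \<le> t then 1 else 0) - p (fst i)) / sqrt (real (N k))" for k and i :: "nat \<times> nat" and x :: real
  have V0: "0 \<le> V" unfolding V_def
    using p01 lam0 by (intro sum_nonneg mult_nonneg_nonneg) auto
  have hm: "h k i \<in> borel_measurable borel" for k i unfolding h_def by measurable
  have indep2: "prob_space.indep_vars (\<Omega> k) (\<lambda>_. borel) (\<lambda>i. Y k (fst i) (snd i)) (I k)" for k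
    using indep[of k] unfolding I_def by (simp add: split_beta')
  have Ym: "Y k (fst i) (snd i) \<in> borel_measurable (\<Omega> k)" if "i \<in> I k" for k i
    using indep2[of k, unfolded prob_space.indep_vars_def2[OF prob[of k]]] that by blast
  have indep3: "prob_space.indep_vars (\<Omega> k) (\<lambda>_. borel) (\<lambda>i \<omega>. h k i (Y k (fst i) (snd i) \<omega>)) (I k)" for k
    by (rule prob_space.indep_vars_compose2[OF prob indep2]) (simp add: hm)
  have Zm: "(\<lambda>\<omega>. \<Sum>i\<in>I k. h k i (Y k (fst i) (snd i) \<omega>)) \<in> borel_measurable (\<Omega> k)" for k
    by (intro borel_measurable_sum measurable_compose[OF Ym hm])
  have fin: "finite (I k)" for k
  proof -
    have "I k \<subseteq> {1..m} \<times> {..<Max ((\<lambda>r. nr k r) ` {1..m})}"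
      unfolding I_def by (auto intro: order.strict_trans2[OF _ Max_ge])
    thus ?thesis by (rule finite_subset) auto
  qed
  have charZ: "char (distr (\<Omega> k) borel (\<lambda>\<omega>. \<Sum>i\<in>I k. h k i (Y k (fst i) (snd i) \<omega>))) s =
      (\<Prod>r=1..m. psi (p r) (s / sqrt (real (N k))) ^ nr k r)" for k s
  proof -
    interpret P: prob_space "\<Omega> k" by (rule prob)
    have "char (distr (\<Omega> k) borel (\<lambda>\<omega>. \<Sum>i\<in>I k. h k i (Y k (fst i) (snd i) \<omega>))) s =
          (\<Prod>i\<in>I k. char (distr (\<Omega> k) borel (\<lambda>\<omega>. h k i (Y k (fst i) (snd i) \<omega>))) s)"
      by (rule P.char_distr_sum[OF indep3])
    also have "\<dots> = (\<Prod>i\<in>I k. psi (p (fst i)) (s / sqrt (real (N k))))"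
    proof (rule prod.cong[OF refl])
      fix i assume i: "i \<in> I k"
      have "P.prob {\<omega> \<in> space (\<Omega> k). Y k (fst i) (snd i) \<omega> \<le> t} = p (fst i)"
        using i pY unfolding I_def by auto
      from P.char_indicator[OF Ym[OF i] this]
      show "char (distr (\<Omega> k) borel (\<lambda>\<omega>. h k i (Y k (fst i) (snd i) \<omega>))) s = psi (p (fst i)) (s / sqrt (real (N k)))"
        unfolding h_def .
    qed
    also have "\<dots> = (\<Prod>r\<in>{1..m}. \<Prod>j\<in>{..<nr k r}. psi (p r) (s / sqrt (real (N k))))"
    proof -
      have e: "I k = Sigma {1..m} (\<lambda>r. {..<nr k r})" unfolding I_def by auto
      have "(\<Prod>r\<in>{1..m}. \<Prod>j\<in>{..<nr k r}. psi (p r) (s / sqrt (real (N k)))) =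
            (\<Prod>(r,j)\<in>Sigma {1..m} (\<lambda>r. {..<nr k r}). psi (p r) (s / sqrt (real (N k))))"
        by (rule prod.Sigma) auto
      thus ?thesis unfolding e by (simp only: split_beta')
    qed
    also have "\<dots> = (\<Prod>r=1..m. psi (p r) (s / sqrt (real (N k))) ^ nr k r)"
      by simp
    finally show ?thesis .
  qed
  have "weak_conv_m (\<lambda>k. distr (\<Omega> k) borel (\<lambda>\<omega>. \<Sum>i\<in>I k. h k i (Y k (fst i) (snd i) \<omega>)))
     (distr std_normal_distribution borel (\<lambda>y. sqrt V * y))"
  proof (rule levy_continuity)
    show "real_distribution (distr (\<Omega> k) borel (\<lambda>\<omega>. \<Sum>i\<in>I k. h k i (Y k (fst i) (snd i) \<omega>)))" for k
      by (rule prob_space.real_distribution_distr[OF prob Zm])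
    show "real_distribution (distr std_normal_distribution borel (\<lambda>y. sqrt V * y))"
      by (rule real_distr_scaled_std)
    fix s
    have "(\<lambda>k. \<Prod>r=1..m. psi (p r) (s / sqrt (real (\<Sum>r=1..m. nr k r))) ^ nr k r)
           \<longlonglongrightarrow> complex_of_real (exp (- (s^2 * (\<Sum>r=1..m. lam r * (p r * (1 - p r)))) / 2))"
      by (rule prod_limit[OF m p01 nr_inf ratio])
    moreover have "(sqrt V * s)^2 = s^2 * V" using V0 by (simp add: power_mult_distrib)
    ultimately show "(\<lambda>k. char (distr (\<Omega> k) borel (\<lambda>\<omega>. \<Sum>i\<in>I k. h k i (Y k (fst i) (snd i) \<omega>))) s)
        \<longlonglongrightarrow> char (distr std_normal_distribution borel (\<lambda>y. sqrt V * y)) s"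
      unfolding charZ char_scaled_std by (simp add: N_def V_def)
  qed
  thus ?thesis unfolding I_def N_def V_def h_def .
qed

lemma sandwich:
  fixes G :: "real \<Rightarrow> real" and Gk :: "nat \<Rightarrow> real \<Rightarrow> real"
  assumes mono: "\<And>k. mono (Gk k)"
    and dpos: "0 < \<delta>"
    and conv: "\<And>y. \<bar>y - c\<bar> < \<delta> \<Longrightarrow> (\<lambda>k. Gk k y) \<longlonglongrightarrow> G y"
    and cont: "isCont G c"
    and ck: "ck \<longlonglongrightarrow> c"
  shows "(\<lambda>k. Gk k (ck k)) \<longlonglongrightarrow> G c"
proof (rule tendstoI)
  fix e :: real assume e: "0 < e"
  obtain \<eta> where \<eta>: "\<eta> > 0" "\<And>y. dist y c < \<eta> \<Longrightarrow> dist (G y) (G c) < e/2"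
    using cont e unfolding continuous_at_eps_delta by (meson half_gt_zero)
  define h where "h = min \<eta> \<delta> / 2"
  have h: "0 < h" "h < \<eta>" "h < \<delta>" using \<eta> dpos by (auto simp: h_def)
  have G1: "\<bar>G (c - h) - G c\<bar> < e/2" and G2: "\<bar>G (c + h) - G c\<bar> < e/2"
    using \<eta>(2)[of "c - h"] \<eta>(2)[of "c + h"] h by (auto simp: dist_real_def)
  have c1: "(\<lambda>k. Gk k (c - h)) \<longlonglongrightarrow> G (c - h)" and c2: "(\<lambda>k. Gk k (c + h)) \<longlonglongrightarrow> G (c + h)"
    using conv h by auto
  have ev1: "eventually (\<lambda>k. dist (Gk k (c - h)) (G (c - h)) < e/2) sequentially"
    using tendstoD[OF c1, of "e/2"] e by simp
  have ev2: "eventually (\<lambda>k. dist (Gk k (c + h)) (G (c + h)) < e/2) sequentially"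
    using tendstoD[OF c2, of "e/2"] e by simp
  have ev3: "eventually (\<lambda>k. dist (ck k) c < h) sequentially"
    using tendstoD[OF ck, of h] h by simp
  show "eventually (\<lambda>k. dist (Gk k (ck k)) (G c) < e) sequentially"
    using ev1 ev2 ev3
  proof eventually_elim
    case (elim k)
    have "c - h \<le> ck k" "ck k \<le> c + h" using elim(3) by (auto simp: dist_real_def)
    hence "Gk k (c - h) \<le> Gk k (ck k)" "Gk k (ck k) \<le> Gk k (c + h)"
      using mono[of k] by (auto simp: mono_def)
    thus ?case using elim(1,2) G1 G2 by (simp only: dist_real_def abs_less_iff) linarith
  qed
qed

lemma std_prob: "prob_space std_normal_distribution"
  by (rule prob_space_normal_density) simp

lemma space_std[simp]: "space std_normal_distribution = UNIV"
  by simp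

lemma normal_as_distr:
  assumes "0 < \<sigma>"
  shows "density lborel (normal_density 0 \<sigma>) = distr std_normal_distribution borel (\<lambda>y. \<sigma> * y)"
proof -
  interpret S: prob_space std_normal_distribution by (rule std_prob)
  have "distributed std_normal_distribution lborel (\<lambda>x. x) (normal_density 0 1)"
    unfolding distributed_def
    by (auto simp: distr_id2 measurable_ident_sets)
  from S.normal_density_affine[OF this, of \<sigma> 0] assms
  have "distributed std_normal_distribution lborel (\<lambda>x. 0 + \<sigma> * x) (normal_density 0 \<sigma>)"
    by simp
  hence "distr std_normal_distribution lborel (\<lambda>x. \<sigma> * x) = density lborel (normal_density 0 \<sigma>)"
    unfolding distributed_def by simp
  moreover have "distr std_normal_distribution lborel (\<lambda>x. \<sigma> * x) = distr std_normal_distribution borel (\<lambda>x. \<sigma> * x)"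
    by (rule distr_cong) auto
  ultimately show ?thesis by simp
qed

lemma cdf_scaled:
  "cdf (distr std_normal_distribution borel (\<lambda>y. a * y)) c = measure std_normal_distribution {y. a * y \<le> c}"
  unfolding cdf_def by (subst measure_distr) (auto simp: vimage_def)

lemma std_UNIV: "measure std_normal_distribution UNIV = 1"
  using prob_space.prob_space[OF std_prob] by simp

lemma cdf_normal_var:
  assumes "0 \<le> v"
  shows "cdf (normal_var v) x = measure std_normal_distribution {y. sqrt v * y \<le> x}"
proof (cases "v = 0")
  case True
  have "cdf (normal_var v) x = indicator {..x} (0::real)"
    unfolding cdf_def normal_var_def using True by (simp add: measure_return)
  thus ?thesis using True std_UNIV by (auto simp: indicator_def)
next
  case False
  hence "normal_var v = distr std_normal_distribution borel (\<lambda>y. sqrt v * y)"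
    using assms normal_as_distr[of "sqrt v"] by (simp add: normal_var_def)
  thus ?thesis by (simp add: cdf_scaled)
qed

lemma cont_scaled:
  assumes "0 < a"
  shows "isCont (\<lambda>c. measure std_normal_distribution {y. a * y \<le> c}) c"
proof -
  interpret R: real_distribution "distr std_normal_distribution borel (\<lambda>y. a * y)"
    by (rule prob_space.real_distribution_distr[OF std_prob]) simp
  have ae: "AE x in lborel. x \<in> {c/a} \<longrightarrow> std_normal_density x = 0"
    using AE_lborel_singleton[of "c/a"] by eventually_elim auto
  have "{c/a} \<in> null_sets std_normal_distribution"
    by (subst null_sets_density_iff) (use ae in auto)
  hence "measure std_normal_distribution {c/a} = 0" by (simp add: measure_def null_setsD1)
  moreover have "(\<lambda>y. a * y) -` {c} \<inter> space std_normal_distribution = {c/a}"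
    using assms by (auto simp: field_simps)
  ultimately have "measure (distr std_normal_distribution borel (\<lambda>y. a * y)) {c} = 0"
    by (subst measure_distr) auto
  hence "isCont (cdf (distr std_normal_distribution borel (\<lambda>y. a * y))) c"
    by (simp add: R.isCont_cdf)
  thus ?thesis by (simp add: cdf_scaled[abs_def])
qed

lemma step_eq: "measure std_normal_distribution {y. 0 * y \<le> c} = (if 0 \<le> c then 1 else 0)"
  using std_UNIV by auto

lemma cont_step:
  assumes "c \<noteq> (0::real)"
  shows "isCont (\<lambda>c. measure std_normal_distribution {y. 0 * y \<le> c}) c"
proof -
  have "eventually (\<lambda>z. z \<in> (if c > 0 then {0<..} else {..<0})) (nhds c)"
    using assms by (intro eventually_nhds_in_open) auto
  hence "eventually (\<lambda>z. measure std_normal_distribution {y. 0 * y \<le> z} = (if 0 \<le> c then 1 else 0)) (nhds c)"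
    by eventually_elim (use assms in \<open>auto simp: step_eq std_UNIV split: if_splits\<close>)
  hence "isCont (\<lambda>c. measure std_normal_distribution {y. 0 * y \<le> c}) c \<longleftrightarrow> isCont (\<lambda>_. (if 0 \<le> c then 1 else 0::real)) c"
    by (intro isCont_cong)
  thus ?thesis by simp
qed

lemma not_cont_step: "\<not> isCont (\<lambda>c. measure std_normal_distribution {y. 0 * y \<le> c}) 0"
proof
  assume "isCont (\<lambda>c. measure std_normal_distribution {y. 0 * y \<le> c}) 0"
  hence "(\<lambda>n. measure std_normal_distribution {y. 0 * y \<le> - inverse (real (Suc n))}) \<longlonglongrightarrow> measure std_normal_distribution {y. 0 * y \<le> 0}"
    by (rule isCont_tendsto_compose) (use LIMSEQ_inverse_real_of_nat tendsto_minus in fastforce)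
  moreover have "measure std_normal_distribution {y. 0 * y \<le> - inverse (real (Suc n))} = 0" for n
    by (simp add: step_eq)
  ultimately have "(\<lambda>n. 0::real) \<longlonglongrightarrow> 1" by (simp add: step_eq std_UNIV)
  thus False by (simp add: LIMSEQ_const_iff)
qed

theorem theorem1:
  fixes m :: nat and F :: "real \<Rightarrow> real" and t :: real
    and \<Omega> :: "nat \<Rightarrow> 'a measure"
    and Y :: "nat \<Rightarrow> nat \<Rightarrow> nat \<Rightarrow> 'a \<Rightarrow> real"
    and nr :: "nat \<Rightarrow> nat \<Rightarrow> nat"
    and lam :: "nat \<Rightarrow> real"
  defines "N \<equiv> (\<lambda>k. \<Sum>r=1..m. nr k r)"
  defines "Fn \<equiv> (\<lambda>k \<omega>. (1 / real (N k)) *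
              (\<Sum>r=1..m. \<Sum>j<nr k r. if Y k r j \<omega> \<le> t then 1 else 0))"
  defines "gn \<equiv> (\<lambda>k. gmix m (\<lambda>r. real (nr k r) / real (N k)))"
  defines "Fmb \<equiv> (\<lambda>k \<omega>. the_inv_into {0..1} (gn k) (Fn k \<omega>))"
  defines "g \<equiv> gmix m lam"
  defines "\<sigma>2 \<equiv> (\<Sum>r=1..m. lam r * Fstrat m F r t * (1 - Fstrat m F r t)) / (deriv g (F t))\<^sup>2"
  assumes m: "m \<ge> 1"
    and F_mono: "mono F"
    and F_rcont: "\<And>x. continuous (at_right x) F"
    and F_bot: "(F \<longlongrightarrow> 0) at_bot"
    and F_top: "(F \<longlongrightarrow> 1) at_top"
    and prob: "\<And>k. prob_space (\<Omega> k)"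
    and indep: "\<And>k. prob_space.indep_vars (\<Omega> k) (\<lambda>_. borel) (\<lambda>(r, j). Y k r j)
                       {(r, j). r \<in> {1..m} \<and> j < nr k r}"
    and distrib: "\<And>k r j s. r \<in> {1..m} \<Longrightarrow> j < nr k r \<Longrightarrow>
                   measure (\<Omega> k) {\<omega> \<in> space (\<Omega> k). Y k r j \<omega> \<le> s} = Fstrat m F r s"
    and nr_inf: "\<And>r. r \<in> {1..m} \<Longrightarrow> filterlim (\<lambda>k. nr k r) at_top sequentially"
    and ratio: "\<And>r. r \<in> {1..m} \<Longrightarrow> (\<lambda>k. real (nr k r) / real (N k)) \<longlonglongrightarrow> lam r"
    and lam_pos: "\<And>r. r \<in> {1..m} \<Longrightarrow> 0 < lam r \<and> lam r < 1"
    and lam_sum: "(\<Sum>r=1..m. lam r) = 1"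
  shows "weak_conv_m (\<lambda>k. distr (\<Omega> k) borel (\<lambda>\<omega>. sqrt (real (N k)) * (Fmb k \<omega> - F t)))
           (normal_var \<sigma>2)"
proof -
  define p where "p r = Fstrat m F r t" for r
  define V where "V = (\<Sum>r=1..m. lam r * (p r * (1 - p r)))"
  define d where "d = (\<Sum>r=1..m. lam r * Gd m r (F t))"
  define I where "I k = {(r, j). r \<in> {1..m} \<and> j < nr k r}" for k
  define Z where "Z k \<omega> = (\<Sum>i\<in>I k. ((if Y k (fst i) (snd i) \<omega> \<le> t then 1 else 0) - p (fst i)) / sqrt (real (N k)))" for k \<omega>
  define Lim where "Lim = distr std_normal_distribution borel (\<lambda>y. sqrt V * y)"
  define T where "T k \<omega> = sqrt (real (N k)) * (Fmb k \<omega> - F t)" for k \<omega>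
  define H where "H c = measure std_normal_distribution {y. sqrt V * y \<le> c}" for c

  have lam0: "0 \<le> lam r" if "r \<in> {1..m}" for r using lam_pos[OF that] by simp
  have Fb: "0 \<le> F x \<and> F x \<le> 1" for x
  proof
    have "eventually (\<lambda>y. F y \<le> F x) at_bot"
      using eventually_le_at_bot[of x] by eventually_elim (use F_mono in \<open>auto simp: mono_def\<close>)
    thus "0 \<le> F x" using F_bot by (intro tendsto_upperbound) auto
    have "eventually (\<lambda>y. F x \<le> F y) at_top"
      using eventually_ge_at_top[of x] by eventually_elim (use F_mono in \<open>auto simp: mono_def\<close>)
    thus "F x \<le> 1" using F_top by (intro tendsto_lowerbound) auto
  qed
  have Ym: "Y k r j \<in> borel_measurable (\<Omega> k)" if "r \<in> {1..m}" "j < nr k r" for k r j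
    using indep[of k, unfolded prob_space.indep_vars_def2[OF prob[of k]]] that by auto
  have G1: "Gm m r 1 = 1" if r: "r \<in> {1..m}" for r
  proof -
    obtain k where k: "nr k r \<ge> 1"
      using nr_inf[OF r] by (auto simp: filterlim_at_top eventually_sequentially)
    interpret D: real_distribution "distr (\<Omega> k) borel (Y k r 0)"
      by (rule prob_space.real_distribution_distr[OF prob Ym[OF r]]) (use k in auto)
    have "cdf (distr (\<Omega> k) borel (Y k r 0)) s = Gm m r (F s)" for s
      unfolding cdf_def using Ym[OF r, of 0 k] k distrib[OF r, of 0 k s]
      by (subst measure_distr) (auto simp: vimage_def Fstrat_Gm Int_def conj_commute)
    hence "cdf (distr (\<Omega> k) borel (Y k r 0)) = (\<lambda>s. Gm m r (F s))" by (simp add: fun_eq_iff)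
    hence A: "((\<lambda>s. Gm m r (F s)) \<longlongrightarrow> 1) at_top"
      using D.cdf_lim_at_top_prob by simp
    have B: "((\<lambda>s. Gm m r (F s)) \<longlongrightarrow> Gm m r 1) at_top"
      by (rule isCont_tendsto_compose[OF Gm_isCont F_top]) auto
    have "(1::real) = Gm m r 1" by (rule tendsto_unique[OF _ A B]) simp
    thus ?thesis by simp
  qed
  have Gmono: "Gm m r x \<le> Gm m r y" if "0 \<le> x" "x \<le> y" "y \<le> 1" "r \<in> {1..m}" for x y r
    using Gm_strict[of m r x y] that m by (cases "x = y") auto
  have p01: "0 \<le> p r \<and> p r \<le> 1" if r: "r \<in> {1..m}" for r
    using Gmono[where x=0 and y="F t" and r=r] Gmono[where x="F t" and y=1 and r=r] Fb[of t] r
    by (auto simp: p_def Fstrat_Gm Gm_0 G1)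
  have pY: "measure (\<Omega> k) {\<omega> \<in> space (\<Omega> k). Y k r j \<omega> \<le> t} = p r" if "r \<in> {1..m}" "j < nr k r" for k r j
    using distrib[OF that] by (simp add: p_def)
  have clt: "weak_conv_m (\<lambda>k. distr (\<Omega> k) borel (Z k)) Lim"
    using clt_strata[OF m prob indep pY p01 nr_inf ratio[unfolded N_def] lam0]
    unfolding Z_def[abs_def] I_def Lim_def V_def N_def by simp

  have hm: "(\<lambda>x::real. ((if x \<le> t then 1 else 0) - p r) / c) \<in> borel_measurable borel" for r c
    by measurable
  have Zm: "Z k \<in> borel_measurable (\<Omega> k)" for k
    unfolding Z_def
  proof (intro borel_measurable_sum)
    fix i assume "i \<in> I k"
    hence "Y k (fst i) (snd i) \<in> borel_measurable (\<Omega> k)" using Ym unfolding I_def by auto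
    from measurable_compose[OF this hm]
    show "(\<lambda>\<omega>. ((if Y k (fst i) (snd i) \<omega> \<le> t then 1 else 0) - p (fst i)) / sqrt (real (N k))) \<in> borel_measurable (\<Omega> k)" .
  qed
  have gG: "g = (\<lambda>x. \<Sum>r=1..m. lam r * Gm m r x)"
    by (simp add: g_def fun_eq_iff gmix_Gm)
  have "(g has_real_derivative d) (at (F t))"
    unfolding gG d_def using Fb[of t]
    by (intro DERIV_sum DERIV_cmult Gm_deriv) auto
  hence dd: "deriv g (F t) = d" by (rule DERIV_imp_deriv)
  have dpos: "0 < d"
  proof -
    have mm: "m \<in> {1..m}" using m by auto
    have "lam m * Gd m m (F t) \<le> d" unfolding d_def
      by (rule member_le_sum[OF mm]) (use lam0 Gd_nonneg Fb in auto)
    moreover have "0 < lam m * Gd m m (F t)"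
      using lam_pos[OF mm] Gd_pos1[OF m] Fb[of t] by auto
    ultimately show ?thesis by simp
  qed
  have V0: "0 \<le> V" unfolding V_def
    using p01 lam0 by (intro sum_nonneg mult_nonneg_nonneg) auto
  have s2: "\<sigma>2 = V / d^2"
    unfolding \<sigma>2_def dd V_def p_def by (simp add: mult.assoc)
  have s20: "0 \<le> \<sigma>2" using s2 V0 by simp
  have target: "cdf (normal_var \<sigma>2) x = H (x * d)" for x
  proof -
    have "cdf (normal_var \<sigma>2) x = measure std_normal_distribution {y. sqrt \<sigma>2 * y \<le> x}"
      by (rule cdf_normal_var[OF s20])
    also have "sqrt \<sigma>2 = sqrt V / d" using dpos by (simp add: s2 real_sqrt_divide)
    also have "{y. sqrt V / d * y \<le> x} = {y. sqrt V * y \<le> x * d}"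
      using dpos by (auto simp: field_simps)
    finally show ?thesis by (simp add: H_def)
  qed
  have Limcdf: "cdf Lim c = H c" for c unfolding Lim_def H_def by (rule cdf_scaled)
  have gnG: "gn k x = (\<Sum>r=1..m. real (nr k r) / real (N k) * Gm m r x)" for k x
    unfolding gn_def gmix_Gm ..
  have sumq: "(\<Sum>r=1..m. real (nr k r) / real (N k)) = 1" if "N k > 0" for k
  proof -
    have e: "(\<Sum>r=1..m. real (nr k r)) = real (N k)" by (simp add: N_def)
    have "(\<Sum>r=1..m. real (nr k r) / real (N k)) = (\<Sum>r=1..m. real (nr k r)) / real (N k)"
      by (simp add: sum_divide_distrib)
    also have "\<dots> = real (N k) / real (N k)" by (simp only: e)
    also have "\<dots> = 1" using that by simp
    finally show ?thesis .
  qed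
  have gn_strict: "gn k x < gn k y" if N: "N k > 0" and xy: "0 \<le> x" "x < y" "y \<le> 1" for k x y
  proof -
    have "\<exists>r\<in>{1..m}. nr k r \<noteq> 0"
    proof (rule ccontr)
      assume "\<not> ?thesis"
      hence "N k = 0" unfolding N_def by (intro sum.neutral) auto
      thus False using N by simp
    qed
    then obtain r0 where r0: "r0 \<in> {1..m}" "nr k r0 > 0" by auto
    show ?thesis unfolding gnG
    proof (rule sum_strict_mono_ex1)
      show "\<forall>r\<in>{1..m}. real (nr k r) / real (N k) * Gm m r x \<le> real (nr k r) / real (N k) * Gm m r y"
      proof
        fix r assume r: "r \<in> {1..m}"
        have "Gm m r x \<le> Gm m r y" using Gmono[where x=x and y=y and r=r] xy r by simp
        thus "real (nr k r) / real (N k) * Gm m r x \<le> real (nr k r) / real (N k) * Gm m r y"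
          by (rule mult_left_mono) simp
      qed
      show "\<exists>r\<in>{1..m}. real (nr k r) / real (N k) * Gm m r x < real (nr k r) / real (N k) * Gm m r y"
        using r0 N Gm_strict[OF m _ xy] by (intro bexI[OF _ r0(1)] mult_strict_left_mono) auto
    qed simp
  qed
  have gn_le_iff: "gn k x \<le> gn k y \<longleftrightarrow> x \<le> y" if "N k > 0" "0 \<le> x" "x \<le> 1" "0 \<le> y" "y \<le> 1" for k x y
    using gn_strict[OF that(1)] that by (metis linorder_not_le order_less_imp_le order_refl order.strict_iff_order)
  have gn0: "gn k 0 = 0" for k by (simp add: gnG Gm_0)
  have gn1: "gn k 1 = 1" if "N k > 0" for k
    using sumq[OF that] by (simp add: gnG G1)
  have gn_cont: "continuous_on {0..1} (gn k)" for k
  proof -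
    have "gn k = (\<lambda>x. \<Sum>r=1..m. real (nr k r) / real (N k) * Gm m r x)" by (simp add: fun_eq_iff gnG)
    moreover have "continuous_on {0..1} (\<lambda>x. \<Sum>r=1..m. real (nr k r) / real (N k) * Gm m r x)"
      by (intro continuous_on_sum continuous_on_mult_left Gm_cont)
    ultimately show ?thesis by simp
  qed
  have inj: "inj_on (gn k) {0..1}" if "N k > 0" for k
  proof (rule inj_onI)
    fix x y assume xy: "x \<in> {0..1}" "y \<in> {0..1}" "gn k x = gn k y"
    hence "x \<le> y" "y \<le> x" using gn_le_iff[OF that, of x y] gn_le_iff[OF that, of y x] by auto
    thus "x = y" by simp
  qed
  have surj: "y \<in> gn k ` {0..1}" if N: "N k > 0" and y: "0 \<le> y" "y \<le> 1" for k y
  proof -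
    obtain x where "0 \<le> x" "x \<le> 1" "gn k x = y"
      using IVT'[of "gn k" 0 y 1] gn_cont gn0 gn1[OF N] y by auto
    thus ?thesis by auto
  qed
  have Fn01: "0 \<le> Fn k \<omega> \<and> Fn k \<omega> \<le> 1" if N: "N k > 0" for k \<omega>
  proof -
    define S where "S = (\<Sum>r=1..m. \<Sum>j<nr k r. if Y k r j \<omega> \<le> t then 1 else (0::real))"
    have "0 \<le> S" unfolding S_def by (intro sum_nonneg) auto
    moreover have "S \<le> (\<Sum>r=1..m. \<Sum>j<nr k r. 1)" unfolding S_def by (intro sum_mono) auto
    hence "S \<le> real (N k)" by (simp add: N_def)
    moreover have "Fn k \<omega> = S / real (N k)" by (simp add: Fn_def S_def)
    ultimately show ?thesis using N by (simp add: divide_le_eq_1)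
  qed
  have Fmb01: "0 \<le> Fmb k \<omega> \<and> Fmb k \<omega> \<le> 1" and gnFmb: "gn k (Fmb k \<omega>) = Fn k \<omega>" if N: "N k > 0" for k \<omega>
  proof -
    have "Fn k \<omega> \<in> gn k ` {0..1}" using surj[OF N] Fn01[OF N] by auto
    thus "0 \<le> Fmb k \<omega> \<and> Fmb k \<omega> \<le> 1" "gn k (Fmb k \<omega>) = Fn k \<omega>"
      unfolding Fmb_def using the_inv_into_into[OF inj[OF N], of "Fn k \<omega>" "{0..1}"] f_the_inv_into_f[OF inj[OF N]]
      by auto
  qed
  have Zeq: "Z k \<omega> = sqrt (real (N k)) * (Fn k \<omega> - gn k (F t))" if N: "N k > 0" for k \<omega>
  proof -
    have sI: "(\<Sum>i\<in>I k. f i) = (\<Sum>r=1..m. \<Sum>j<nr k r. f (r, j))" for f :: "nat \<times> nat \<Rightarrow> real"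
    proof -
      have e: "I k = Sigma {1..m} (\<lambda>r. {..<nr k r})" unfolding I_def by auto
      have "(\<Sum>r\<in>{1..m}. \<Sum>j\<in>{..<nr k r}. f (r, j)) = (\<Sum>(r,j)\<in>Sigma {1..m} (\<lambda>r. {..<nr k r}). f (r, j))"
        by (rule sum.Sigma) auto
      thus ?thesis unfolding e by simp
    qed
    define S where "S = (\<Sum>r=1..m. \<Sum>j<nr k r. if Y k r j \<omega> \<le> t then 1 else (0::real))"
    define P where "P = (\<Sum>r=1..m. real (nr k r) * p r)"
    have sq: "sqrt (real (N k)) * sqrt (real (N k)) = real (N k)" by simp
    have sqp: "sqrt (real (N k)) > 0" using N by simp
    have "Z k \<omega> = (\<Sum>i\<in>I k. (if Y k (fst i) (snd i) \<omega> \<le> t then 1 else 0) - p (fst i)) / sqrt (real (N k))"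
      unfolding Z_def by (simp add: sum_divide_distrib)
    also have "\<dots> = (S - P) / sqrt (real (N k))"
      unfolding sI S_def P_def by (simp add: sum_subtractf)
    also have "\<dots> = sqrt (real (N k)) * ((1 / real (N k)) * S - P / real (N k))"
    proof -
      have gen: "(S - P) / q = q * ((1 / (q * q)) * S - P / (q * q))" if "q > 0" for q :: real
        using that by (simp add: field_simps)
      show ?thesis using gen[OF sqp, unfolded sq] .
    qed
    also have "P / real (N k) = gn k (F t)"
      unfolding P_def gnG p_def Fstrat_Gm by (simp add: sum_divide_distrib)
    finally show ?thesis by (simp add: Fn_def S_def)
  qed
  have Tset: "{\<omega> \<in> space (\<Omega> k). T k \<omega> \<le> a} =
     (if F t + a / sqrt (real (N k)) < 0 then {} else if 1 \<le> F t + a / sqrt (real (N k)) then space (\<Omega> k)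
      else {\<omega> \<in> space (\<Omega> k). Z k \<omega> \<le> sqrt (real (N k)) * (gn k (F t + a / sqrt (real (N k))) - gn k (F t))})"
    if N: "N k > 0" for k a
  proof -
    define b where "b = F t + a / sqrt (real (N k))"
    have sqp: "sqrt (real (N k)) > 0" using N by simp
    have Tb: "T k \<omega> \<le> a \<longleftrightarrow> Fmb k \<omega> \<le> b" for \<omega>
      unfolding T_def b_def using sqp by (simp add: field_simps)
    have Zc: "Fmb k \<omega> \<le> b \<longleftrightarrow> Z k \<omega> \<le> sqrt (real (N k)) * (gn k b - gn k (F t))" if "0 \<le> b" "b \<le> 1" for \<omega>
    proof -
      have "Fmb k \<omega> \<le> b \<longleftrightarrow> gn k (Fmb k \<omega>) \<le> gn k b"
        using gn_le_iff[OF N, of "Fmb k \<omega>" b] Fmb01[OF N, of \<omega>] that by simp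
      also have "\<dots> \<longleftrightarrow> Fn k \<omega> - gn k (F t) \<le> gn k b - gn k (F t)" using gnFmb[OF N] by simp
      also have "\<dots> \<longleftrightarrow> Z k \<omega> \<le> sqrt (real (N k)) * (gn k b - gn k (F t))"
        unfolding Zeq[OF N] using sqp by simp
      finally show ?thesis .
    qed
    have A: "\<not> Fmb k \<omega> \<le> b" if "b < 0" for \<omega> using Fmb01[OF N, of \<omega>] that by linarith
    have B: "Fmb k \<omega> \<le> b" if "1 \<le> b" for \<omega> using Fmb01[OF N, of \<omega>] that by linarith
    show ?thesis
      unfolding b_def[symmetric] using A B Zc by (auto simp: Tb not_less)
  qed
  have Tm: "T k \<in> borel_measurable (\<Omega> k)" for k
  proof (cases "N k = 0")
    case True
    hence "T k = (\<lambda>\<omega>. 0)" by (simp add: T_def fun_eq_iff)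
    thus ?thesis by simp
  next
    case False
    hence N: "N k > 0" by simp
    note Zm[measurable]
    show ?thesis unfolding borel_measurable_iff_le
      by (intro allI, subst Tset[OF N]) auto
  qed
  have cdfT: "cdf (distr (\<Omega> k) borel (T k)) a = measure (\<Omega> k) {\<omega> \<in> space (\<Omega> k). T k \<omega> \<le> a}" for k a
    unfolding cdf_def by (subst measure_distr[OF Tm]) (auto simp: vimage_def Int_def conj_commute)
  have cdfZ: "cdf (distr (\<Omega> k) borel (Z k)) a = measure (\<Omega> k) {\<omega> \<in> space (\<Omega> k). Z k \<omega> \<le> a}" for k a
    unfolding cdf_def by (subst measure_distr[OF Zm]) (auto simp: vimage_def Int_def conj_commute)

  have Npos_ev: "eventually (\<lambda>k. N k > 0) sequentially"
  proof -
    have "eventually (\<lambda>k. nr k 1 \<ge> 1) sequentially"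
      using nr_inf[of 1] m by (auto simp: filterlim_at_top)
    thus ?thesis
    proof eventually_elim
      case (elim k)
      have "nr k 1 \<le> N k" unfolding N_def using m by (intro member_le_sum) auto
      thus ?case using elim by simp
    qed
  qed
  have Ninf: "filterlim N at_top sequentially"
  proof (rule filterlim_at_top_mono[OF nr_inf[of 1]])
    show "1 \<in> {1..m}" using m by auto
    show "\<forall>\<^sub>F x in sequentially. nr x 1 \<le> N x"
      unfolding N_def using m by (intro always_eventually allI member_le_sum) auto
  qed
  have sN: "filterlim (\<lambda>k. sqrt (real (N k))) at_top sequentially"
    by (rule filterlim_compose[OF sqrt_at_top filterlim_compose[OF filterlim_real_sequentially Ninf]])
  have xsN: "(\<lambda>k. x / sqrt (real (N k))) \<longlonglongrightarrow> 0" for x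
    by (rule tendsto_divide_0[OF tendsto_const filterlim_at_top_imp_at_infinity[OF sN]])
  define b where "b x k = F t + x / sqrt (real (N k))" for x k
  define c where "c x k = sqrt (real (N k)) * (gn k (b x k) - gn k (F t))" for x k
  have blim: "(\<lambda>k. b x k) \<longlonglongrightarrow> F t" for x
    unfolding b_def using tendsto_add[OF tendsto_const xsN[of x]] by simp
  have clim: "(\<lambda>k. c x k) \<longlonglongrightarrow> x * d" for x
  proof (cases "x = 0")
    case True
    thus ?thesis by (simp add: c_def b_def)
  next
    case False
    define h where "h k = x / sqrt (real (N k))" for k
    define DQ where "DQ r y = (Gm m r (F t + y) - Gm m r (F t)) / y" for r y
    have hlim: "filterlim h (at 0) sequentially"
    proof (rule filterlim_atI)
      show "h \<longlonglongrightarrow> 0" unfolding h_def by (rule xsN)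
      show "eventually (\<lambda>k. h k \<noteq> 0) sequentially"
        using Npos_ev by eventually_elim (use False in \<open>simp add: h_def\<close>)
    qed
    have DQlim: "(\<lambda>k. DQ r (h k)) \<longlonglongrightarrow> Gd m r (F t)" for r
    proof -
      have "(Gm m r has_real_derivative Gd m r (F t)) (at (F t))"
        using Fb[of t] by (intro Gm_deriv) auto
      hence "(DQ r \<longlongrightarrow> Gd m r (F t)) (at 0)"
        unfolding DQ_def by (rule DERIV_D)
      thus ?thesis by (rule filterlim_compose[OF _ hlim])
    qed
    have lim2: "(\<lambda>k. x * (\<Sum>r=1..m. real (nr k r) / real (N k) * DQ r (h k))) \<longlonglongrightarrow> x * (\<Sum>r=1..m. lam r * Gd m r (F t))"
      by (intro tendsto_mult tendsto_sum tendsto_const DQlim ratio) auto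
    have ev: "eventually (\<lambda>k. x * (\<Sum>r=1..m. real (nr k r) / real (N k) * DQ r (h k)) = c x k) sequentially"
      using Npos_ev
    proof eventually_elim
      case (elim k)
      have sqp: "sqrt (real (N k)) > 0" using elim by simp
      have "c x k = (\<Sum>r=1..m. real (nr k r) / real (N k) * (sqrt (real (N k)) * (Gm m r (F t + h k) - Gm m r (F t))))"
        unfolding c_def b_def gnG h_def
        by (simp add: sum_distrib_left sum_subtractf[symmetric] algebra_simps)
      also have "\<dots> = x * (\<Sum>r=1..m. real (nr k r) / real (N k) * DQ r (h k))"
        unfolding sum_distrib_left
      proof (rule sum.cong[OF refl])
        fix r
        have "sqrt (real (N k)) = x / h k" using sqp False by (simp add: h_def)
        thus "real (nr k r) / real (N k) * (sqrt (real (N k)) * (Gm m r (F t + h k) - Gm m r (F t))) =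
              x * (real (nr k r) / real (N k) * DQ r (h k))"
          by (simp add: DQ_def)
      qed
      finally show ?case by simp
    qed
    show ?thesis using lim2 unfolding d_def tendsto_cong[OF ev] .
  qed
  have cdfeq: "cdf (distr (\<Omega> k) borel (T k)) x = cdf (distr (\<Omega> k) borel (Z k)) (c x k)"
    if "N k > 0" "0 \<le> b x k" "b x k < 1" for k x
    using that unfolding cdfT cdfZ Tset[OF that(1)] b_def[symmetric] c_def[symmetric] by simp
  have Zdist: "real_distribution (distr (\<Omega> k) borel (Z k))" for k
    by (rule prob_space.real_distribution_distr[OF prob Zm])
  have cdfLim_eq: "cdf Lim = H" by (simp add: fun_eq_iff Limcdf)
  have V0H: "H y = (if 0 \<le> y then 1 else 0)" if "V = 0" for y
    unfolding H_def using that step_eq by simp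
  have sand: "(\<lambda>k. cdf (distr (\<Omega> k) borel (Z k)) (c x k)) \<longlonglongrightarrow> H (x * d)" if xv: "x * d \<noteq> 0 \<or> V > 0" for x
  proof -
    obtain \<delta> where \<delta>: "\<delta> > 0" "\<And>y. \<bar>y - x * d\<bar> < \<delta> \<Longrightarrow> isCont H y"
    proof (cases "V > 0")
      case True
      show ?thesis
        by (rule that[of 1]) (use True in \<open>auto simp: H_def[abs_def] intro!: cont_scaled\<close>)
    next
      case False
      hence V: "V = 0" using V0 by simp
      hence xd: "x * d \<noteq> 0" using xv by simp
      have HH: "H = (\<lambda>c. measure std_normal_distribution {y. 0 * y \<le> c})"
        using V by (simp add: H_def[abs_def])
      show ?thesis
      proof (rule that[of "\<bar>x * d\<bar>"])
        show "\<bar>x * d\<bar> > 0" using xd by simp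
        fix y assume "\<bar>y - x * d\<bar> < \<bar>x * d\<bar>"
        hence "y \<noteq> 0" by auto
        thus "isCont H y" unfolding HH by (rule cont_step)
      qed
    qed
    have mon: "mono (cdf (distr (\<Omega> k) borel (Z k)))" for k
    proof -
      interpret R: real_distribution "distr (\<Omega> k) borel (Z k)" by (rule Zdist)
      show ?thesis by (auto simp: mono_def intro: R.cdf_nondecreasing)
    qed
    have conv: "(\<lambda>k. cdf (distr (\<Omega> k) borel (Z k)) y) \<longlonglongrightarrow> H y" if "\<bar>y - x * d\<bar> < \<delta>" for y
    proof -
      have "isCont (cdf Lim) y" using \<delta>(2)[OF that] cdfLim_eq by simp
      thus ?thesis using clt unfolding weak_conv_m_def weak_conv_def cdfLim_eq by blast
    qed
    have cH: "isCont H (x * d)" using \<delta> by simp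
    show ?thesis by (rule sandwich[OF mon \<delta>(1) conv cH clim])
  qed
  have via_sand: "(\<lambda>k. cdf (distr (\<Omega> k) borel (T k)) x) \<longlonglongrightarrow> H (x * d)"
    if "x * d \<noteq> 0 \<or> V > 0" "eventually (\<lambda>k. 0 \<le> b x k \<and> b x k < 1) sequentially" for x
  proof -
    have ev: "eventually (\<lambda>k. cdf (distr (\<Omega> k) borel (Z k)) (c x k) = cdf (distr (\<Omega> k) borel (T k)) x) sequentially"
      using that(2) Npos_ev by eventually_elim (simp add: cdfeq)
    show ?thesis using sand[OF that(1)] unfolding tendsto_cong[OF ev] .
  qed
  have eqT: "(\<lambda>\<omega>. sqrt (real (N k)) * (Fmb k \<omega> - F t)) = T k" for k
    by (simp add: T_def fun_eq_iff)
  have cdfN: "cdf (normal_var \<sigma>2) = (\<lambda>x. H (x * d))" by (simp add: fun_eq_iff target)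
  have V_zero: "V = 0" if "F t = 0 \<or> F t = 1"
  proof -
    have "p r = 0 \<or> p r = 1" if "r \<in> {1..m}" for r
      using \<open>F t = 0 \<or> F t = 1\<close> G1[OF that] by (auto simp: p_def Fstrat_Gm Gm_0)
    thus ?thesis unfolding V_def by (intro sum.neutral) auto
  qed
  have xnz: "x \<noteq> 0" if "V = 0" "isCont (cdf (normal_var \<sigma>2)) x" for x
  proof
    assume x0: "x = 0"
    have "cdf (normal_var \<sigma>2) = (\<lambda>c. measure std_normal_distribution {y. 0 * y \<le> c})"
      unfolding cdfN using \<open>V = 0\<close> dpos
      by (auto simp: fun_eq_iff V0H step_eq std_UNIV zero_le_mult_iff)
    with that(2) x0 not_cont_step show False by simp
  qed
  show ?thesis
    unfolding weak_conv_m_def weak_conv_def eqT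
  proof (intro allI impI)
    fix x assume cx: "isCont (cdf (normal_var \<sigma>2)) x"
    show "(\<lambda>k. cdf (distr (\<Omega> k) borel (T k)) x) \<longlonglongrightarrow> cdf (normal_var \<sigma>2) x"
      unfolding target
    proof (cases "0 < F t \<and> F t < 1")
      case True
      have "0 < V" unfolding V_def
      proof (rule sum_pos)
        fix r assume r: "r \<in> {1..m}"
        have "Gm m r 0 < Gm m r (F t)" "Gm m r (F t) < Gm m r 1"
          using Gm_strict[OF m, of r] True r by auto
        hence "0 < p r" "p r < 1" using G1[OF r] by (auto simp: p_def Fstrat_Gm Gm_0)
        thus "0 < lam r * (p r * (1 - p r))" using lam_pos[OF r] by simp
      qed (use m in auto)
      moreover have "eventually (\<lambda>k. 0 \<le> b x k \<and> b x k < 1) sequentially"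
      proof -
        have "eventually (\<lambda>k. 0 < b x k) sequentially" using order_tendstoD(1)[OF blim] True by auto
        moreover have "eventually (\<lambda>k. b x k < 1) sequentially" using order_tendstoD(2)[OF blim] True by auto
        ultimately show ?thesis by eventually_elim auto
      qed
      ultimately show "(\<lambda>k. cdf (distr (\<Omega> k) borel (T k)) x) \<longlonglongrightarrow> H (x * d)"
        by (intro via_sand) auto
    next
      case False
      hence Ft: "F t = 0 \<or> F t = 1" using Fb[of t] by auto
      have V: "V = 0" by (rule V_zero[OF Ft])
      have x0: "x \<noteq> 0" by (rule xnz[OF V cx])
      have xd0: "x * d \<noteq> 0" using x0 dpos by simp
      show "(\<lambda>k. cdf (distr (\<Omega> k) borel (T k)) x) \<longlonglongrightarrow> H (x * d)"
      proof (cases "F t = 0")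
        case F0: True
        show ?thesis
        proof (cases "x < 0")
          case True
          have "eventually (\<lambda>k. cdf (distr (\<Omega> k) borel (T k)) x = H (x * d)) sequentially"
            using Npos_ev
          proof eventually_elim
            case (elim k)
            have "b x k < 0" using elim True F0 by (simp add: b_def divide_neg_pos)
            hence se: "{\<omega> \<in> space (\<Omega> k). T k \<omega> \<le> x} = {}"
              using Tset[OF elim, of x] unfolding b_def by simp
            have "H (x * d) = 0" using V0H[OF V] True dpos by (simp add: mult_neg_pos not_le)
            thus ?case unfolding cdfT se by simp
          qed
          thus ?thesis by (rule tendsto_eventually)
        next
          case False
          hence xp: "x > 0" using x0 by simp
          have "eventually (\<lambda>k. 0 \<le> b x k \<and> b x k < 1) sequentially"
          proof -
            have "eventually (\<lambda>k. b x k < 1) sequentially" using order_tendstoD(2)[OF blim] F0 by auto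
            thus ?thesis using Npos_ev by eventually_elim (use xp F0 in \<open>auto simp: b_def\<close>)
          qed
          thus ?thesis using xd0 by (intro via_sand) auto
        qed
      next
        case F1': False
        hence F1: "F t = 1" using Ft by simp
        show ?thesis
        proof (cases "x > 0")
          case True
          have "eventually (\<lambda>k. cdf (distr (\<Omega> k) borel (T k)) x = H (x * d)) sequentially"
            using Npos_ev
          proof eventually_elim
            case (elim k)
            have "1 \<le> b x k" using elim True F1 by (simp add: b_def)
            hence se: "{\<omega> \<in> space (\<Omega> k). T k \<omega> \<le> x} = space (\<Omega> k)"
              using Tset[OF elim, of x] unfolding b_def by simp
            have "H (x * d) = 1" using V0H[OF V] True dpos by simp
            thus ?case unfolding cdfT se using prob_space.prob_space[OF prob] by simp
          qed
          thus ?thesis by (rule tendsto_eventually)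
        next
          case False
          hence xn: "x < 0" using x0 by simp
          have "eventually (\<lambda>k. 0 \<le> b x k \<and> b x k < 1) sequentially"
          proof -
            have "eventually (\<lambda>k. 0 < b x k) sequentially" using order_tendstoD(1)[OF blim] F1 by auto
            thus ?thesis using Npos_ev by eventually_elim (use xn F1 in \<open>auto simp: b_def divide_neg_pos\<close>)
          qed
          thus ?thesis using xd0 by (intro via_sand) auto
        qed
      qed
    qed
  qed
qed

end
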